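(* Fix $\beta>2$ and $r>0$, and let $G_\beta,H_\beta,K_\beta,g_\beta$, $r_1^\beta$ and $F_\beta(\mathbf{x},r)$ be as in the context. The equation $$K_\beta(y-3r/2)+H_\beta(y)+K_\beta(y)=1,\qquad y\in(-\infty,g_\beta],$$ has a unique solution $y_1^\beta(r)$ if $r\le r_1^\beta$ and has no solution if $r>r_1^\beta$. Furthermore, if $r<r_1^\beta$, the point $\big(H_\beta(y_1^\beta(r)),K_\beta(y_1^\beta(r))\big)$ is a saddle point of $F_\beta(\cdot,r)$.
   Context: $\Xi=\{(x_1,x_2): x_1,x_2\ge0,\ x_1+x_2\le1\}$, $x_0=1-x_1-x_2$, $\mathbf{v}_k=(\cos(2\pi k/3),\sin(2\pi k/3))$, and $F_\beta(\mathbf{x},r)=-\frac12|\sum_{k=0}^2x_k\mathbf{v}_k|^2+\frac1\beta\sum_{k=0}^2x_k\log(3x_k)+r\,x_0-\frac r2(x_1+x_2)$ (potential with external field of magnitude $r$, angle $\pi$). $G_\beta(x)=\frac1\beta\log x-\frac32x$ on $(0,\infty)$, $l_\beta=2/(3\beta)$, $g_\beta=G_\beta(l_\beta)$; for $y<g_\beta$, $H_\beta(y)<l_\beta<K_\beta(y)$ are the two solutions of $G_\beta(x)=y$, and $H_\beta(g_\beta)=K_\beta(g_\beta)=l_\beta$. $r_1^\beta=1-\frac2\beta-\frac{2}{3\beta}\log\big(\frac{3\beta}2-2\big)$. A saddle point is a critical point at which the Hessian in $(x_1,x_2)$ has one positive and one negative eigenvalue. *)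

theory Defs
  imports "HOL-Analysis.Analysis"
begin

definition xlog3 :: "real \<Rightarrow> real" where
  "xlog3 x = (if x = 0 then 0 else x * ln (3 * x))"

text \<open>The potential F_beta((x1,x2), r), with x0 = 1 - x1 - x2 and
  v_k = (cos(2 pi k/3), sin(2 pi k/3)).\<close>
definition Fpot :: "real \<Rightarrow> real \<Rightarrow> real \<Rightarrow> real \<Rightarrow> real" where
  "Fpot \<beta> r x1 x2 =
     (let x0 = 1 - x1 - x2;
          mx = x0 * cos 0 + x1 * cos (2*pi/3) + x2 * cos (4*pi/3);
          my = x0 * sin 0 + x1 * sin (2*pi/3) + x2 * sin (4*pi/3)
      in - (1/2) * (mx^2 + my^2)
         + (1/\<beta>) * (xlog3 x0 + xlog3 x1 + xlog3 x2)
         + r * x0 - (r/2) * (x1 + x2))"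

definition Gfun :: "real \<Rightarrow> real \<Rightarrow> real" where
  "Gfun \<beta> x = (1/\<beta>) * ln x - (3/2) * x"

definition lb :: "real \<Rightarrow> real" where
  "lb \<beta> = 2 / (3 * \<beta>)"

definition gb :: "real \<Rightarrow> real" where
  "gb \<beta> = Gfun \<beta> (lb \<beta>)"

definition Hb :: "real \<Rightarrow> real \<Rightarrow> real" where
  "Hb \<beta> y = (THE x. 0 < x \<and> x \<le> lb \<beta> \<and> Gfun \<beta> x = y)"

definition Kb :: "real \<Rightarrow> real \<Rightarrow> real" where
  "Kb \<beta> y = (THE x. lb \<beta> \<le> x \<and> Gfun \<beta> x = y)"

definition r1 :: "real \<Rightarrow> real" where
  "r1 \<beta> = 1 - 2/\<beta> - (2/(3*\<beta>)) * ln (3*\<beta>/2 - 2)"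

definition eq_y1 :: "real \<Rightarrow> real \<Rightarrow> real \<Rightarrow> bool" where
  "eq_y1 \<beta> r y \<longleftrightarrow> y \<le> gb \<beta> \<and> Kb \<beta> (y - 3*r/2) + Hb \<beta> y + Kb \<beta> y = 1"

definition y1 :: "real \<Rightarrow> real \<Rightarrow> real" where
  "y1 \<beta> r = (THE y. eq_y1 \<beta> r y)"

definition pd1 :: "(real \<Rightarrow> real \<Rightarrow> real) \<Rightarrow> real \<Rightarrow> real \<Rightarrow> real" where
  "pd1 f a b = deriv (\<lambda>t. f t b) a"

definition pd2 :: "(real \<Rightarrow> real \<Rightarrow> real) \<Rightarrow> real \<Rightarrow> real \<Rightarrow> real" where
  "pd2 f a b = deriv (\<lambda>t. f a t) b"

definition hess :: "(real \<Rightarrow> real \<Rightarrow> real) \<Rightarrow> real \<Rightarrow> real \<Rightarrow> nat \<Rightarrow> nat \<Rightarrow> real" where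
  "hess f a b i j =
     (if i = 1 \<and> j = 1 then pd1 (pd1 f) a b
      else if i = 1 \<and> j = 2 then pd2 (pd1 f) a b
      else if i = 2 \<and> j = 1 then pd1 (pd2 f) a b
      else pd2 (pd2 f) a b)"

definition eigen2 :: "(nat \<Rightarrow> nat \<Rightarrow> real) \<Rightarrow> real \<Rightarrow> bool" where
  "eigen2 M lam \<longleftrightarrow> (\<exists>u v. (u, v) \<noteq> (0, 0) \<and>
      M 1 1 * u + M 1 2 * v = lam * u \<and> M 2 1 * u + M 2 2 * v = lam * v)"

definition critical_pt :: "(real \<Rightarrow> real \<Rightarrow> real) \<Rightarrow> real \<Rightarrow> real \<Rightarrow> bool" where
  "critical_pt f a b \<longleftrightarrow> ((\<lambda>p. f (fst p) (snd p)) has_derivative (\<lambda>h. 0)) (at (a, b))"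

definition saddle_pt :: "real \<Rightarrow> real \<Rightarrow> real \<Rightarrow> real \<Rightarrow> bool" where
  "saddle_pt \<beta> r a b \<longleftrightarrow>
     0 < a \<and> 0 < b \<and> a + b < 1 \<and>
     critical_pt (Fpot \<beta> r) a b \<and>
     (\<exists>lam1 lam2. lam1 > 0 \<and> lam2 < 0 \<and> eigen2 (hess (Fpot \<beta> r) a b) lam1
                              \<and> eigen2 (hess (Fpot \<beta> r) a b) lam2)"

end

theory Submission imports Defs begin

lemma psi_pos:
  fixes t :: real assumes "t > 1" shows "2 * ln t < t - 1/t"
proof -
  have "(\<lambda>x. x - 1/x - 2 * ln x) 1 < (\<lambda>x. x - 1/x - 2 * ln x) t"
  proof (rule DERIV_pos_imp_increasing_open[OF assms])
    fix x :: real assume x: "1 < x" "x < t"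
    have "DERIV (\<lambda>x. x - 1/x - 2 * ln x) x :> 1 + 1/x^2 - 2/x"
      using x by (auto intro!: derivative_eq_intros simp: field_simps power2_eq_square)
    moreover have "1 + 1/x^2 - 2/x = (1 - 1/x)^2" using x by (simp add: power2_eq_square field_simps)
    moreover have "(1 - 1/x)^2 > 0" using x by simp
    ultimately show "\<exists>y. DERIV (\<lambda>x. x - 1/x - 2 * ln x) x :> y \<and> y > 0" by auto
  next
    show "continuous_on {1..t} (\<lambda>x. x - 1/x - 2 * ln x)"
      by (auto intro!: continuous_intros)
  qed
  thus ?thesis by simp
qed

lemma chi_pos:
  fixes t :: real assumes "t > 1" shows "2 * (t - 1) < (t + 1) * ln t"
proof -
  have "(\<lambda>x. (x + 1) * ln x - 2 * (x - 1)) 1 < (\<lambda>x. (x + 1) * ln x - 2 * (x - 1)) t"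
  proof (rule DERIV_pos_imp_increasing_open[OF assms])
    fix x :: real assume x: "1 < x" "x < t"
    have "DERIV (\<lambda>x. (x + 1) * ln x - 2 * (x - 1)) x :> ln x + (x + 1) / x - 2"
      using x by (auto intro!: derivative_eq_intros simp: field_simps)
    moreover have "- ln x < (1 - x) / x" using ln_diff_less[of 1 x] x by simp
    hence "ln x + (x + 1) / x - 2 > 0" using x by (simp add: field_simps)
    ultimately show "\<exists>y. DERIV (\<lambda>x. (x + 1) * ln x - 2 * (x - 1)) x :> y \<and> y > 0" by auto
  next
    show "continuous_on {1..t} (\<lambda>x. (x + 1) * ln x - 2 * (x - 1))"
      by (auto intro!: continuous_intros)
  qed
  thus ?thesis by simp
qed

definition phi :: "real \<Rightarrow> real" where "phi t = (t + 1) * ln t / (t - 1)"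

lemma phi_mono:
  fixes s t :: real assumes "1 < s" "s < t" shows "phi s < phi t"
proof (rule DERIV_pos_imp_increasing[OF assms(2)])
  fix x assume x: "s \<le> x" "x \<le> t"
  hence x1: "x > 1" using assms by linarith
  have "DERIV phi x :> ((x - 1/x) - 2 * ln x) / (x-1)^2"
    unfolding phi_def using x1 by (auto intro!: derivative_eq_intros simp: field_simps power2_eq_square)
  moreover have "(x - 1/x) - 2 * ln x > 0" using psi_pos[OF x1] by simp
  ultimately show "\<exists>y. DERIV phi x :> y \<and> y > 0" using x1 by auto
qed

lemma lb_facts: "\<beta> > 2 \<Longrightarrow> 0 < lb \<beta> \<and> lb \<beta> < 1/3"
  unfolding lb_def by (auto simp: field_simps)

lemma G_inc:
  assumes "\<beta> > 0" "0 < a" "a < b" "b \<le> lb \<beta>" shows "Gfun \<beta> a < Gfun \<beta> b"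
proof -
  have "ln a - ln b < (a - b) / b" using ln_diff_less[of a b] assms by simp
  moreover have "(a - b) / b = - ((b - a) / b)" by (metis minus_diff_eq minus_divide_left)
  ultimately have "ln b - ln a > (b - a) / b" by linarith
  hence "(1/\<beta>) * (ln b - ln a) > (1/\<beta>) * ((b - a) / b)" using assms by (intro mult_strict_left_mono) auto
  moreover have "(1/\<beta>) * ((b - a) / b) \<ge> (3/2) * (b - a)"
  proof -
    have "\<beta> * b \<le> 2/3" using assms(4) assms(1) unfolding lb_def by (simp add: field_simps)
    hence "1 / (\<beta> * b) \<ge> 3/2" using assms by (simp add: field_simps)
    hence "(b - a) * (1 / (\<beta> * b)) \<ge> (b - a) * (3/2)" using assms by (intro mult_left_mono) auto
    thus ?thesis by (simp add: field_simps)
  qed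
  moreover have "Gfun \<beta> b - Gfun \<beta> a = (1/\<beta>) * (ln b - ln a) - (3/2) * (b - a)"
    unfolding Gfun_def right_diff_distrib by linarith
  ultimately show ?thesis by linarith
qed

lemma G_dec:
  assumes "\<beta> > 0" "lb \<beta> \<le> a" "a < b" shows "Gfun \<beta> b < Gfun \<beta> a"
proof -
  have apos: "a > 0" using assms unfolding lb_def by (smt (verit) divide_pos_pos)
  have "ln b - ln a < (b - a) / a" using ln_diff_less[of b a] assms apos by simp
  hence "(1/\<beta>) * (ln b - ln a) < (1/\<beta>) * ((b - a) / a)" using assms by (intro mult_strict_left_mono) auto
  moreover have "(1/\<beta>) * ((b - a) / a) \<le> (3/2) * (b - a)"
  proof -
    have "\<beta> * a \<ge> 2/3" using assms(2) assms(1) unfolding lb_def by (simp add: field_simps)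
    hence "1 / (\<beta> * a) \<le> 3/2" using assms apos by (simp add: field_simps)
    hence "(b - a) * (1 / (\<beta> * a)) \<le> (b - a) * (3/2)" using assms by (intro mult_left_mono) auto
    thus ?thesis by (simp add: field_simps)
  qed
  moreover have "Gfun \<beta> b - Gfun \<beta> a = (1/\<beta>) * (ln b - ln a) - (3/2) * (b - a)"
    unfolding Gfun_def right_diff_distrib by linarith
  ultimately show ?thesis by linarith
qed

lemma G_le_g: assumes "\<beta> > 2" "x > 0" shows "Gfun \<beta> x \<le> gb \<beta>"
  unfolding gb_def using G_inc[of \<beta> x "lb \<beta>"] G_dec[of \<beta> "lb \<beta>" x] assms
  by (cases "x < lb \<beta>"; cases "x = lb \<beta>") auto

lemma G_cont: "\<beta> > 0 \<Longrightarrow> 0 < a \<Longrightarrow> continuous_on {a..b} (Gfun \<beta>)"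
  unfolding Gfun_def by (auto intro!: continuous_intros)

lemma H_ex: assumes "\<beta> > 2" "y \<le> gb \<beta>" shows "\<exists>x. 0 < x \<and> x \<le> lb \<beta> \<and> Gfun \<beta> x = y"
proof -
  define x0 where "x0 = min (lb \<beta>) (exp (\<beta> * y))"
  have l: "0 < lb \<beta>" using lb_facts assms by auto
  have x0: "0 < x0" "x0 \<le> lb \<beta>" "x0 \<le> exp (\<beta> * y)" using l unfolding x0_def by auto
  have "ln x0 \<le> \<beta> * y" using x0 by (metis ln_exp ln_le_cancel_iff exp_gt_zero)
  hence "(1/\<beta>) * ln x0 \<le> y" using assms by (simp add: field_simps)
  hence "Gfun \<beta> x0 \<le> y" unfolding Gfun_def using x0 by simp
  moreover have "y \<le> Gfun \<beta> (lb \<beta>)" using assms gb_def by simp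
  ultimately obtain x where "x0 \<le> x" "x \<le> lb \<beta>" "Gfun \<beta> x = y"
    using IVT'[of "Gfun \<beta>" x0 y "lb \<beta>"] G_cont[of \<beta> x0 "lb \<beta>"] x0 assms by auto
  thus ?thesis using x0 by (intro exI[of _ x]) auto
qed

lemma K_ex: assumes "\<beta> > 2" "y \<le> gb \<beta>" shows "\<exists>x. lb \<beta> \<le> x \<and> Gfun \<beta> x = y"
proof -
  define x1 where "x1 = max (lb \<beta>) (- y)"
  have l: "0 < lb \<beta>" using lb_facts assms by auto
  have x1: "0 < x1" "lb \<beta> \<le> x1" "- y \<le> x1" using l unfolding x1_def by auto
  have "ln x1 \<le> x1 - 1" using ln_le_minus_one x1 by auto
  hence "(1/\<beta>) * ln x1 \<le> (1/\<beta>) * x1" using assms by (intro mult_left_mono) auto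
  also have "\<dots> \<le> (1/2) * x1" using assms x1 by (intro mult_right_mono) (auto simp: field_simps)
  finally have A: "(1/\<beta>) * ln x1 \<le> (1/2) * x1" .
  have "Gfun \<beta> x1 = (1/\<beta>) * ln x1 - (3/2) * x1" by (simp add: Gfun_def)
  hence "Gfun \<beta> x1 \<le> y" using A x1 by linarith
  moreover have "y \<le> Gfun \<beta> (lb \<beta>)" using assms gb_def by simp
  ultimately obtain x where "lb \<beta> \<le> x" "x \<le> x1" "Gfun \<beta> x = y"
    using IVT2'[of "Gfun \<beta>" x1 y "lb \<beta>"] G_cont[of \<beta> "lb \<beta>" x1] l x1 assms by auto
  thus ?thesis by auto
qed

lemma H_uniq: assumes "\<beta> > 2" "0 < x" "x \<le> lb \<beta>" "0 < x'" "x' \<le> lb \<beta>" "Gfun \<beta> x = Gfun \<beta> x'"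
  shows "x = x'"
  using G_inc[of \<beta> x x'] G_inc[of \<beta> x' x] assms by (cases x x' rule: linorder_cases) auto

lemma K_uniq: assumes "\<beta> > 2" "lb \<beta> \<le> x" "lb \<beta> \<le> x'" "Gfun \<beta> x = Gfun \<beta> x'"
  shows "x = x'"
  using G_dec[of \<beta> x x'] G_dec[of \<beta> x' x] assms by (cases x x' rule: linorder_cases) auto

lemma H_props: assumes "\<beta> > 2" "y \<le> gb \<beta>"
  shows "0 < Hb \<beta> y \<and> Hb \<beta> y \<le> lb \<beta> \<and> Gfun \<beta> (Hb \<beta> y) = y"
proof -
  obtain x where x: "0 < x \<and> x \<le> lb \<beta> \<and> Gfun \<beta> x = y" using H_ex assms by blast
  have "\<exists>!x. 0 < x \<and> x \<le> lb \<beta> \<and> Gfun \<beta> x = y"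
    using x H_uniq[OF assms(1)] by blast
  thus ?thesis unfolding Hb_def by (rule theI')
qed

lemma H_eq: assumes "\<beta> > 2" "0 < x" "x \<le> lb \<beta>" "Gfun \<beta> x = y" shows "Hb \<beta> y = x"
  unfolding Hb_def using assms H_uniq[OF assms(1)] by (intro the_equality) auto

lemma K_props: assumes "\<beta> > 2" "y \<le> gb \<beta>"
  shows "lb \<beta> \<le> Kb \<beta> y \<and> Gfun \<beta> (Kb \<beta> y) = y"
proof -
  obtain x where x: "lb \<beta> \<le> x \<and> Gfun \<beta> x = y" using K_ex assms by blast
  have "\<exists>!x. lb \<beta> \<le> x \<and> Gfun \<beta> x = y"
    using x K_uniq[OF assms(1)] by blast
  thus ?thesis unfolding Kb_def by (rule theI')
qed

lemma K_eq: assumes "\<beta> > 2" "lb \<beta> \<le> x" "Gfun \<beta> x = y" shows "Kb \<beta> y = x"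
  unfolding Kb_def using assms K_uniq[OF assms(1)] by (intro the_equality) auto

lemma H_strict: assumes "\<beta> > 2" "u1 < u2" "u2 \<le> gb \<beta>" shows "Hb \<beta> u1 < Hb \<beta> u2"
proof (rule ccontr)
  assume "\<not> ?thesis"
  hence "Hb \<beta> u2 \<le> Hb \<beta> u1" by simp
  moreover have "Gfun \<beta> (Hb \<beta> u1) = u1" "Gfun \<beta> (Hb \<beta> u2) = u2" "0 < Hb \<beta> u2" "Hb \<beta> u1 \<le> lb \<beta>"
    using H_props[OF assms(1)] assms by auto
  ultimately show False using G_inc[of \<beta> "Hb \<beta> u2" "Hb \<beta> u1"] assms
    by (cases "Hb \<beta> u2 = Hb \<beta> u1") auto
qed

lemma K_strict: assumes "\<beta> > 2" "u1 < u2" "u2 \<le> gb \<beta>" shows "Kb \<beta> u2 < Kb \<beta> u1"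
proof (rule ccontr)
  assume "\<not> ?thesis"
  hence "Kb \<beta> u1 \<le> Kb \<beta> u2" by simp
  moreover have "Gfun \<beta> (Kb \<beta> u1) = u1" "Gfun \<beta> (Kb \<beta> u2) = u2" "lb \<beta> \<le> Kb \<beta> u1"
    using K_props[OF assms(1)] assms by auto
  ultimately show False using G_dec[of \<beta> "Kb \<beta> u1" "Kb \<beta> u2"] assms
    by (cases "Kb \<beta> u2 = Kb \<beta> u1") auto
qed

lemma HK_rel: assumes "\<beta> > 2" "y \<le> gb \<beta>"
  shows "lb \<beta> * ln (Kb \<beta> y / Hb \<beta> y) = Kb \<beta> y - Hb \<beta> y"
proof -
  have h: "0 < Hb \<beta> y" "Gfun \<beta> (Hb \<beta> y) = y" using H_props[OF assms] by auto
  have k: "lb \<beta> \<le> Kb \<beta> y" "Gfun \<beta> (Kb \<beta> y) = y" using K_props[OF assms] by auto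
  have kp: "0 < Kb \<beta> y" using k lb_facts[OF assms(1)] by linarith
  have "(1/\<beta>) * ln (Kb \<beta> y) - (3/2) * Kb \<beta> y = (1/\<beta>) * ln (Hb \<beta> y) - (3/2) * Hb \<beta> y"
    using h k unfolding Gfun_def by simp
  hence "(1/\<beta>) * (ln (Kb \<beta> y) - ln (Hb \<beta> y)) = (3/2) * (Kb \<beta> y - Hb \<beta> y)"
    by (simp add: right_diff_distrib)
  hence "(2/(3*\<beta>)) * (ln (Kb \<beta> y) - ln (Hb \<beta> y)) = Kb \<beta> y - Hb \<beta> y"
    using assms(1) by (simp add: field_simps)
  thus ?thesis unfolding lb_def using h kp by (simp add: ln_div)
qed

lemma strict_inside: assumes "\<beta> > 2" "y < gb \<beta>"
  shows "Hb \<beta> y < lb \<beta>" "lb \<beta> < Kb \<beta> y"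
proof -
  have h: "0 < Hb \<beta> y" "Hb \<beta> y \<le> lb \<beta>" "Gfun \<beta> (Hb \<beta> y) = y" using H_props assms by auto
  have k: "lb \<beta> \<le> Kb \<beta> y" "Gfun \<beta> (Kb \<beta> y) = y" using K_props assms by auto
  show "Hb \<beta> y < lb \<beta>" using h assms unfolding gb_def by (cases "Hb \<beta> y = lb \<beta>") auto
  show "lb \<beta> < Kb \<beta> y" using k assms unfolding gb_def by (cases "Kb \<beta> y = lb \<beta>") auto
qed

lemma HK_g: assumes "\<beta> > 2" shows "Hb \<beta> (gb \<beta>) = lb \<beta>" "Kb \<beta> (gb \<beta>) = lb \<beta>"
  using H_eq[OF assms, of "lb \<beta>"] K_eq[OF assms, of "lb \<beta>"] lb_facts[OF assms] unfolding gb_def by auto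

lemma t_facts: assumes "\<beta> > 2" "y < gb \<beta>"
  shows "Kb \<beta> y / Hb \<beta> y > 1"
    "Hb \<beta> y * (Kb \<beta> y / Hb \<beta> y - 1) = lb \<beta> * ln (Kb \<beta> y / Hb \<beta> y)"
    "Kb \<beta> y = (Kb \<beta> y / Hb \<beta> y) * Hb \<beta> y"
proof -
  have h: "0 < Hb \<beta> y" using H_props assms by auto
  have s: "Hb \<beta> y < Kb \<beta> y" using strict_inside[OF assms] by linarith
  show "Kb \<beta> y / Hb \<beta> y > 1" using h s by simp
  show "Hb \<beta> y * (Kb \<beta> y / Hb \<beta> y - 1) = lb \<beta> * ln (Kb \<beta> y / Hb \<beta> y)"
  proof -
    have "Hb \<beta> y * (Kb \<beta> y / Hb \<beta> y - 1) = Kb \<beta> y - Hb \<beta> y" using h by (simp add: field_simps)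
    thus ?thesis using HK_rel[of \<beta> y] assms by simp
  qed
  show "Kb \<beta> y = (Kb \<beta> y / Hb \<beta> y) * Hb \<beta> y" using h by simp
qed

lemma sum_phi: assumes "\<beta> > 2" "y < gb \<beta>"
  shows "Hb \<beta> y + Kb \<beta> y = lb \<beta> * phi (Kb \<beta> y / Hb \<beta> y)"
proof -
  define t where "t = Kb \<beta> y / Hb \<beta> y"
  have t1: "t > 1" and e: "Hb \<beta> y * (t - 1) = lb \<beta> * ln t" and k: "Kb \<beta> y = t * Hb \<beta> y"
    using t_facts[OF assms] unfolding t_def by auto
  have hf: "Hb \<beta> y = lb \<beta> * ln t / (t - 1)" using e t1 by (simp add: field_simps)
  have "Hb \<beta> y + Kb \<beta> y = Hb \<beta> y * (t + 1)" using k by (simp add: algebra_simps)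
  also have "\<dots> = (lb \<beta> * ln t / (t - 1)) * (t + 1)" using hf by simp
  also have "\<dots> = lb \<beta> * phi t" unfolding phi_def by simp
  finally show ?thesis unfolding t_def .
qed

lemma sum_mono: assumes "\<beta> > 2" "u1 < u2" "u2 \<le> gb \<beta>"
  shows "Hb \<beta> u2 + Kb \<beta> u2 < Hb \<beta> u1 + Kb \<beta> u1"
proof -
  have l: "0 < lb \<beta>" using lb_facts assms by auto
  have u1: "u1 < gb \<beta>" using assms by linarith
  have t1: "Kb \<beta> u1 / Hb \<beta> u1 > 1" using t_facts[OF assms(1) u1] by auto
  show ?thesis
  proof (cases "u2 = gb \<beta>")
    case True
    have "2 * (Kb \<beta> u1 / Hb \<beta> u1 - 1) < (Kb \<beta> u1 / Hb \<beta> u1 + 1) * ln (Kb \<beta> u1 / Hb \<beta> u1)"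
      using chi_pos[OF t1] .
    hence "phi (Kb \<beta> u1 / Hb \<beta> u1) > 2" unfolding phi_def using t1 by (simp add: field_simps)
    hence "lb \<beta> * phi (Kb \<beta> u1 / Hb \<beta> u1) > lb \<beta> * 2" using l by simp
    thus ?thesis using sum_phi[OF assms(1) u1] HK_g[OF assms(1)] True by simp
  next
    case False
    hence u2: "u2 < gb \<beta>" using assms by simp
    have t2: "Kb \<beta> u2 / Hb \<beta> u2 > 1" using t_facts[OF assms(1) u2] by auto
    have hh: "0 < Hb \<beta> u2" "Hb \<beta> u1 < Hb \<beta> u2" "0 < Hb \<beta> u1"
      using H_strict[OF assms] H_props[OF assms(1)] assms u1 by auto
    have kk: "Kb \<beta> u2 < Kb \<beta> u1" "0 < Kb \<beta> u2"
      using K_strict[OF assms] K_props[OF assms(1) assms(3)] l by auto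
    have "Kb \<beta> u2 / Hb \<beta> u2 < Kb \<beta> u1 / Hb \<beta> u2" using hh kk by (simp add: divide_strict_right_mono)
    also have "\<dots> < Kb \<beta> u1 / Hb \<beta> u1" using hh kk by (intro divide_strict_left_mono) auto
    finally have "phi (Kb \<beta> u2 / Hb \<beta> u2) < phi (Kb \<beta> u1 / Hb \<beta> u1)" using phi_mono t2 by blast
    thus ?thesis using sum_phi[OF assms(1) u1] sum_phi[OF assms(1) u2] l by simp
  qed
qed

lemma saddle_ineq: assumes "\<beta> > 2" "y < gb \<beta>"
  shows "2 * Hb \<beta> y * Kb \<beta> y < lb \<beta> * (Hb \<beta> y + Kb \<beta> y)"
proof -
  define t where "t = Kb \<beta> y / Hb \<beta> y"
  define h where "h = Hb \<beta> y"
  have t1: "t > 1" and e: "h * (t - 1) = lb \<beta> * ln t" and k: "Kb \<beta> y = t * h"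
    using t_facts[OF assms] unfolding t_def h_def by auto
  have hp: "h > 0" using H_props assms h_def by auto
  have l: "0 < lb \<beta>" using lb_facts assms by auto
  have "2 * ln t < t - 1/t" using psi_pos[OF t1] .
  hence "2 * t * ln t < t * t - 1" using t1 by (simp add: field_simps)
  hence "lb \<beta> * (2 * t * ln t) < lb \<beta> * (t * t - 1)" using l by simp
  hence "2 * t * (h * (t - 1)) < lb \<beta> * (t * t - 1)" using e by (simp add: algebra_simps)
  hence "(t - 1) * (2 * t * h) < (t - 1) * (lb \<beta> * (1 + t))" by (simp add: algebra_simps)
  hence "2 * t * h < lb \<beta> * (1 + t)" using t1 by simp
  hence "h * (2 * t * h) < h * (lb \<beta> * (1 + t))" using hp by simp
  thus ?thesis unfolding k h_def[symmetric] by (simp add: algebra_simps)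
qed

lemma H_cont: assumes "\<beta> > 2" "a \<le> gb \<beta>" shows "continuous_on {a..gb \<beta>} (Hb \<beta>)"
proof -
  define s where "s = {Hb \<beta> a .. lb \<beta>}"
  have ha: "0 < Hb \<beta> a" "Hb \<beta> a \<le> lb \<beta>" "Gfun \<beta> (Hb \<beta> a) = a" using H_props assms by auto
  have img: "Gfun \<beta> ` s = {a..gb \<beta>}"
  proof
    show "Gfun \<beta> ` s \<subseteq> {a..gb \<beta>}"
    proof
      fix z assume "z \<in> Gfun \<beta> ` s"
      then obtain x where x: "x \<in> s" "z = Gfun \<beta> x" by auto
      have xs: "Hb \<beta> a \<le> x" "x \<le> lb \<beta>" using x unfolding s_def by auto
      have "a \<le> Gfun \<beta> x"
      proof (cases "x = Hb \<beta> a")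
        case True thus ?thesis using ha by simp
      next
        case False thus ?thesis using G_inc[of \<beta> "Hb \<beta> a" x] xs ha assms by simp
      qed
      moreover have "Gfun \<beta> x \<le> gb \<beta>" using G_le_g[OF assms(1), of x] xs ha by simp
      ultimately show "z \<in> {a..gb \<beta>}" using x by auto
    qed
  next
    show "{a..gb \<beta>} \<subseteq> Gfun \<beta> ` s"
    proof
      fix y assume y: "y \<in> {a..gb \<beta>}"
      have "Hb \<beta> a \<le> Hb \<beta> y" using H_strict[OF assms(1), of a y] y by (cases "a = y") auto
      moreover have "Hb \<beta> y \<le> lb \<beta>" "Gfun \<beta> (Hb \<beta> y) = y" using H_props[OF assms(1)] y by auto
      ultimately show "y \<in> Gfun \<beta> ` s" unfolding s_def by (intro image_eqI[of _ _ "Hb \<beta> y"]) auto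
    qed
  qed
  have "continuous_on (Gfun \<beta> ` s) (Hb \<beta>)"
  proof (rule continuous_on_inv)
    show "continuous_on s (Gfun \<beta>)" unfolding s_def by (rule G_cont) (use ha assms in auto)
    show "compact s" unfolding s_def by simp
    show "\<forall>x\<in>s. Hb \<beta> (Gfun \<beta> x) = x"
    proof
      fix x assume "x \<in> s"
      hence "0 < x" "x \<le> lb \<beta>" using ha unfolding s_def by auto
      thus "Hb \<beta> (Gfun \<beta> x) = x" using H_eq[OF assms(1)] by blast
    qed
  qed
  thus ?thesis using img by simp
qed

lemma K_cont: assumes "\<beta> > 2" "a \<le> gb \<beta>" shows "continuous_on {a..gb \<beta>} (Kb \<beta>)"
proof -
  define s where "s = {lb \<beta> .. Kb \<beta> a}"
  have ka: "lb \<beta> \<le> Kb \<beta> a" "Gfun \<beta> (Kb \<beta> a) = a" using K_props assms by auto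
  have l: "0 < lb \<beta>" using lb_facts assms by auto
  have img: "Gfun \<beta> ` s = {a..gb \<beta>}"
  proof
    show "Gfun \<beta> ` s \<subseteq> {a..gb \<beta>}"
    proof
      fix z assume "z \<in> Gfun \<beta> ` s"
      then obtain x where x: "x \<in> s" "z = Gfun \<beta> x" by auto
      have xs: "lb \<beta> \<le> x" "x \<le> Kb \<beta> a" using x unfolding s_def by auto
      have "a \<le> Gfun \<beta> x"
      proof (cases "x = Kb \<beta> a")
        case True thus ?thesis using ka by simp
      next
        case False thus ?thesis using G_dec[of \<beta> x "Kb \<beta> a"] xs ka assms by simp
      qed
      moreover have "Gfun \<beta> x \<le> gb \<beta>" using G_le_g[OF assms(1), of x] xs l by simp
      ultimately show "z \<in> {a..gb \<beta>}" using x by auto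
    qed
  next
    show "{a..gb \<beta>} \<subseteq> Gfun \<beta> ` s"
    proof
      fix y assume y: "y \<in> {a..gb \<beta>}"
      have "Kb \<beta> y \<le> Kb \<beta> a" using K_strict[OF assms(1), of a y] y by (cases "a = y") auto
      moreover have "lb \<beta> \<le> Kb \<beta> y" "Gfun \<beta> (Kb \<beta> y) = y" using K_props[OF assms(1)] y by auto
      ultimately show "y \<in> Gfun \<beta> ` s" unfolding s_def by (intro image_eqI[of _ _ "Kb \<beta> y"]) auto
    qed
  qed
  have "continuous_on (Gfun \<beta> ` s) (Kb \<beta>)"
  proof (rule continuous_on_inv)
    show "continuous_on s (Gfun \<beta>)" unfolding s_def by (rule G_cont) (use l assms in auto)
    show "compact s" unfolding s_def by simp
    show "\<forall>x\<in>s. Kb \<beta> (Gfun \<beta> x) = x"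
    proof
      fix x assume "x \<in> s"
      hence "lb \<beta> \<le> x" unfolding s_def by auto
      thus "Kb \<beta> (Gfun \<beta> x) = x" using K_eq[OF assms(1)] by blast
    qed
  qed
  thus ?thesis using img by simp
qed


definition Lf :: "real \<Rightarrow> real \<Rightarrow> real \<Rightarrow> real" where
  "Lf \<beta> r y = Kb \<beta> (y - 3*r/2) + Hb \<beta> y + Kb \<beta> y"

lemma eq_y1_iff: "eq_y1 \<beta> r y \<longleftrightarrow> y \<le> gb \<beta> \<and> Lf \<beta> r y = 1"
  unfolding eq_y1_def Lf_def by simp

lemma L_strict: assumes "\<beta> > 2" "r \<ge> 0" "u1 < u2" "u2 \<le> gb \<beta>"
  shows "Lf \<beta> r u2 < Lf \<beta> r u1"
proof -
  have "Kb \<beta> (u2 - 3*r/2) < Kb \<beta> (u1 - 3*r/2)" using K_strict[OF assms(1)] assms by auto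
  thus ?thesis using sum_mono[OF assms(1) assms(3,4)] unfolding Lf_def by linarith
qed

lemma L_cont: assumes "\<beta> > 2" "r \<ge> 0" "a \<le> gb \<beta>" shows "continuous_on {a..gb \<beta>} (Lf \<beta> r)"
proof -
  have c1: "continuous_on {a - 3*r/2..gb \<beta>} (Kb \<beta>)" using K_cont assms by auto
  have "continuous_on {a..gb \<beta>} (\<lambda>y. Kb \<beta> (y - 3*r/2))"
    by (rule continuous_on_compose2[OF c1]) (use assms in \<open>auto intro!: continuous_intros\<close>)
  moreover have "continuous_on {a..gb \<beta>} (Kb \<beta>)"
    using continuous_on_subset[OF c1] assms by auto
  ultimately show ?thesis unfolding Lf_def using H_cont[OF assms(1,3)]
    by (auto intro!: continuous_intros)
qed

lemma L_low: assumes "\<beta> > 2" "r \<ge> 0" shows "Lf \<beta> r (Gfun \<beta> 1) > 1" "Gfun \<beta> 1 < gb \<beta>"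
proof -
  have l: "0 < lb \<beta>" "lb \<beta> < 1/3" using lb_facts assms by auto
  show g: "Gfun \<beta> 1 < gb \<beta>" unfolding gb_def using G_dec[of \<beta> "lb \<beta>" 1] l assms by auto
  have "Kb \<beta> (Gfun \<beta> 1) = 1" using K_eq[OF assms(1), of 1] l by auto
  moreover have "Hb \<beta> (Gfun \<beta> 1) > 0" using H_props[OF assms(1)] g by auto
  moreover have "Kb \<beta> (Gfun \<beta> 1 - 3*r/2) > 0" using K_props[OF assms(1), of "Gfun \<beta> 1 - 3*r/2"] g l assms by auto
  ultimately show "Lf \<beta> r (Gfun \<beta> 1) > 1" unfolding Lf_def by linarith
qed

lemma r1_ident: assumes "\<beta> > 2" shows "gb \<beta> - Gfun \<beta> (1 - 2 * lb \<beta>) = (3/2) * r1 \<beta>"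
proof -
  have p1: "2/(3*\<beta>) > 0" "3*\<beta>/2 - 2 > 0" using assms by auto
  have e: "1 - 2 * lb \<beta> = (2/(3*\<beta>)) * (3*\<beta>/2 - 2)" unfolding lb_def using assms by (simp add: field_simps)
  have "ln ((2/(3*\<beta>)) * (3*\<beta>/2 - 2)) = ln (2/(3*\<beta>)) + ln (3*\<beta>/2 - 2)"
    using p1 by (rule ln_mult_pos)
  hence "ln (1 - 2 * lb \<beta>) = ln (2/(3*\<beta>)) + ln (3*\<beta>/2 - 2)" using e by simp
  thus ?thesis unfolding gb_def Gfun_def r1_def lb_def using assms by (simp add: field_simps)
qed

lemma L_g: assumes "\<beta> > 2" "r \<ge> 0"
  shows "(Lf \<beta> r (gb \<beta>) < 1 \<longleftrightarrow> r < r1 \<beta>)" "(Lf \<beta> r (gb \<beta>) = 1 \<longleftrightarrow> r = r1 \<beta>)"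
proof -
  define m where "m = 1 - 2 * lb \<beta>"
  have l: "0 < lb \<beta>" "lb \<beta> < 1/3" using lb_facts assms by auto
  have ml: "lb \<beta> \<le> m" "0 < m" using l unfolding m_def by auto
  have gm: "Gfun \<beta> m \<le> gb \<beta>" using G_le_g[OF assms(1)] ml by auto
  have Km: "Kb \<beta> (Gfun \<beta> m) = m" using K_eq[OF assms(1)] ml by auto
  have id: "gb \<beta> - Gfun \<beta> m = (3/2) * r1 \<beta>" using r1_ident[OF assms(1)] m_def by simp
  have Lg: "Lf \<beta> r (gb \<beta>) = Kb \<beta> (gb \<beta> - 3*r/2) + 2 * lb \<beta>" unfolding Lf_def using HK_g[OF assms(1)] by simp
  have gc: "gb \<beta> - 3*r/2 \<le> gb \<beta>" using assms by simp
  consider "r < r1 \<beta>" | "r = r1 \<beta>" | "r > r1 \<beta>" by linarith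
  then have "(Kb \<beta> (gb \<beta> - 3*r/2) < m \<longleftrightarrow> r < r1 \<beta>) \<and> (Kb \<beta> (gb \<beta> - 3*r/2) = m \<longleftrightarrow> r = r1 \<beta>)"
  proof cases
    case 1
    hence "Gfun \<beta> m < gb \<beta> - 3*r/2" using id by linarith
    hence "Kb \<beta> (gb \<beta> - 3*r/2) < m" using K_strict[OF assms(1) _ gc] Km by fastforce
    thus ?thesis using 1 by auto
  next
    case 2
    hence "Gfun \<beta> m = gb \<beta> - 3*r/2" using id by linarith
    thus ?thesis using 2 Km by auto
  next
    case 3
    hence "Gfun \<beta> m > gb \<beta> - 3*r/2" using id by linarith
    hence "Kb \<beta> (gb \<beta> - 3*r/2) > m" using K_strict[OF assms(1) _ gm] Km by fastforce
    thus ?thesis using 3 by auto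
  qed
  thus "(Lf \<beta> r (gb \<beta>) < 1 \<longleftrightarrow> r < r1 \<beta>)" "(Lf \<beta> r (gb \<beta>) = 1 \<longleftrightarrow> r = r1 \<beta>)"
    unfolding Lg m_def by auto
qed



definition Ent :: "real \<Rightarrow> real" where "Ent x = x * ln (3 * x)"

lemma Ent_has_derivative[derivative_intros]:
  assumes "(f has_derivative f') (at x)" "f x > 0"
  shows "((\<lambda>y. Ent (f y)) has_derivative (\<lambda>h. (ln (3 * f x) + 1) * f' h)) (at x)"
  unfolding Ent_def
  apply (rule has_derivative_eq_rhs)
  using assms apply (auto intro!: derivative_eq_intros)[1]
  apply (rule ext)
  using assms(2) apply (simp add: field_simps)
  done

lemma Ent_DERIV[derivative_intros]:
  assumes "(f has_field_derivative f') (at x)" "f x > 0"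
  shows "((\<lambda>y. Ent (f y)) has_field_derivative ((ln (3 * f x) + 1) * f')) (at x)"
  unfolding Ent_def
  apply (rule DERIV_cong)
  using assms apply (auto intro!: derivative_eq_intros)[1]
  using assms(2) apply (simp add: field_simps)
  done

definition Qf :: "real \<Rightarrow> real \<Rightarrow> real \<Rightarrow> real \<Rightarrow> real" where
  "Qf \<beta> r x1 x2 = -(1/2) * ((1 - 3/2*(x1+x2))^2 + 3/4*(x1-x2)^2)
     + (1/\<beta>) * (Ent (1-x1-x2) + Ent x1 + Ent x2)
     + r*(1-x1-x2) - r/2*(x1+x2)"

definition D1 :: "real \<Rightarrow> real \<Rightarrow> real \<Rightarrow> real \<Rightarrow> real" where
  "D1 \<beta> r x1 x2 = 3/2 - 3*x1 - 3/2*x2 + (1/\<beta>) * (ln (3*x1) - ln (3*(1-x1-x2))) - 3*r/2"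
definition D2 :: "real \<Rightarrow> real \<Rightarrow> real \<Rightarrow> real \<Rightarrow> real" where
  "D2 \<beta> r x1 x2 = 3/2 - 3/2*x1 - 3*x2 + (1/\<beta>) * (ln (3*x2) - ln (3*(1-x1-x2))) - 3*r/2"

lemma Q_frechet:
  assumes "0 < a" "0 < b" "a + b < 1" "\<beta> > 0"
  shows "((\<lambda>p. Qf \<beta> r (fst p) (snd p)) has_derivative (\<lambda>h. D1 \<beta> r a b * fst h + D2 \<beta> r a b * snd h)) (at (a, b))"
  unfolding Qf_def
  apply (rule has_derivative_eq_rhs)
  using assms apply (auto intro!: derivative_eq_intros)[1]
  apply (rule ext)
  using assms apply (simp add: D1_def D2_def field_simps)
  done

lemma Q_d1:
  assumes "0 < a" "0 < b" "a + b < 1" "\<beta> > 0"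
  shows "DERIV (\<lambda>t. Qf \<beta> r t b) a :> D1 \<beta> r a b"
  unfolding Qf_def
  apply (rule DERIV_cong)
  using assms apply (auto intro!: derivative_eq_intros)[1]
  using assms apply (simp add: D1_def field_simps)
  done

lemma Q_d2:
  assumes "0 < a" "0 < b" "a + b < 1" "\<beta> > 0"
  shows "DERIV (\<lambda>t. Qf \<beta> r a t) b :> D2 \<beta> r a b"
  unfolding Qf_def
  apply (rule DERIV_cong)
  using assms apply (auto intro!: derivative_eq_intros)[1]
  using assms apply (simp add: D2_def field_simps)
  done
definition D11 :: "real \<Rightarrow> real \<Rightarrow> real \<Rightarrow> real" where
  "D11 \<beta> x1 x2 = -3 + (1/\<beta>) * (1/x1 + 1/(1-x1-x2))"
definition D12 :: "real \<Rightarrow> real \<Rightarrow> real \<Rightarrow> real" where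
  "D12 \<beta> x1 x2 = -3/2 + (1/\<beta>) * (1/(1-x1-x2))"
definition D22 :: "real \<Rightarrow> real \<Rightarrow> real \<Rightarrow> real" where
  "D22 \<beta> x1 x2 = -3 + (1/\<beta>) * (1/x2 + 1/(1-x1-x2))"

definition L3 :: "real \<Rightarrow> real" where "L3 x = ln (3 * x)"

lemma L3_DERIV[derivative_intros]:
  assumes "(f has_field_derivative f') (at x)" "f x > 0"
  shows "((\<lambda>t. L3 (f t)) has_field_derivative (f' / f x)) (at x)"
  unfolding L3_def
  apply (rule DERIV_cong)
  using assms apply (auto intro!: derivative_eq_intros)[1]
  using assms(2) apply (simp add: field_simps)
  done

lemma Dgen:
  assumes "DERIV P x :> P'" "DERIV f x :> f'" "DERIV g x :> g'" "f x > 0" "g x > 0"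
  shows "DERIV (\<lambda>t. P t + k * (L3 (f t) - L3 (g t))) x :> P' + k * (f' / f x - g' / g x)"
  by (intro DERIV_add DERIV_cmult DERIV_diff L3_DERIV assms)

lemma D1_d1: assumes "0 < a" "0 < b" "a + b < 1" "\<beta> > 0"
  shows "DERIV (\<lambda>t. D1 \<beta> r t b) a :> D11 \<beta> a b"
proof -
  have "DERIV (\<lambda>t. (3/2 - 3*t - 3/2*b - 3*r/2) + (1/\<beta>) * (L3 t - L3 (1 - t - b))) a
        :> -3 + (1/\<beta>) * (1/a - (-1)/(1 - a - b))"
    by (rule Dgen) (use assms in \<open>auto intro!: derivative_eq_intros\<close>)
  moreover have "(\<lambda>t. (3/2 - 3*t - 3/2*b - 3*r/2) + (1/\<beta>) * (L3 t - L3 (1 - t - b))) = (\<lambda>t. D1 \<beta> r t b)"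
    by (rule ext) (simp add: D1_def L3_def)
  moreover have "-3 + (1/\<beta>) * (1/a - (-1)/(1 - a - b)) = D11 \<beta> a b" by (simp add: D11_def)
  ultimately show ?thesis by simp
qed

lemma D1_d2: assumes "0 < a" "0 < b" "a + b < 1" "\<beta> > 0"
  shows "DERIV (\<lambda>t. D1 \<beta> r a t) b :> D12 \<beta> a b"
proof -
  have "DERIV (\<lambda>t. (3/2 - 3*a - 3/2*t - 3*r/2) + (1/\<beta>) * (L3 a - L3 (1 - a - t))) b
        :> -3/2 + (1/\<beta>) * (0/a - (-1)/(1 - a - b))"
    by (rule Dgen) (use assms in \<open>auto intro!: derivative_eq_intros\<close>)
  moreover have "(\<lambda>t. (3/2 - 3*a - 3/2*t - 3*r/2) + (1/\<beta>) * (L3 a - L3 (1 - a - t))) = (\<lambda>t. D1 \<beta> r a t)"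
    by (rule ext) (simp add: D1_def L3_def)
  moreover have "-3/2 + (1/\<beta>) * (0/a - (-1)/(1 - a - b)) = D12 \<beta> a b" by (simp add: D12_def)
  ultimately show ?thesis by simp
qed

lemma D2_d1: assumes "0 < a" "0 < b" "a + b < 1" "\<beta> > 0"
  shows "DERIV (\<lambda>t. D2 \<beta> r t b) a :> D12 \<beta> a b"
proof -
  have "DERIV (\<lambda>t. (3/2 - 3/2*t - 3*b - 3*r/2) + (1/\<beta>) * (L3 b - L3 (1 - t - b))) a
        :> -3/2 + (1/\<beta>) * (0/b - (-1)/(1 - a - b))"
    by (rule Dgen) (use assms in \<open>auto intro!: derivative_eq_intros\<close>)
  moreover have "(\<lambda>t. (3/2 - 3/2*t - 3*b - 3*r/2) + (1/\<beta>) * (L3 b - L3 (1 - t - b))) = (\<lambda>t. D2 \<beta> r t b)"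
    by (rule ext) (simp add: D2_def L3_def)
  moreover have "-3/2 + (1/\<beta>) * (0/b - (-1)/(1 - a - b)) = D12 \<beta> a b" by (simp add: D12_def)
  ultimately show ?thesis by simp
qed

lemma D2_d2: assumes "0 < a" "0 < b" "a + b < 1" "\<beta> > 0"
  shows "DERIV (\<lambda>t. D2 \<beta> r a t) b :> D22 \<beta> a b"
proof -
  have "DERIV (\<lambda>t. (3/2 - 3/2*a - 3*t - 3*r/2) + (1/\<beta>) * (L3 t - L3 (1 - a - t))) b
        :> -3 + (1/\<beta>) * (1/b - (-1)/(1 - a - b))"
    by (rule Dgen) (use assms in \<open>auto intro!: derivative_eq_intros\<close>)
  moreover have "(\<lambda>t. (3/2 - 3/2*a - 3*t - 3*r/2) + (1/\<beta>) * (L3 t - L3 (1 - a - t))) = (\<lambda>t. D2 \<beta> r a t)"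
    by (rule ext) (simp add: D2_def L3_def)
  moreover have "-3 + (1/\<beta>) * (1/b - (-1)/(1 - a - b)) = D22 \<beta> a b" by (simp add: D22_def)
  ultimately show ?thesis by simp
qed

lemma cos_240: "cos (4*pi/3) = -1/2" and sin_240: "sin (4*pi/3) = - sqrt 3 / 2"
proof -
  have e: "4*pi/3 = 2 * (2*pi/3)" by simp
  show "cos (4*pi/3) = -1/2" unfolding e cos_double_cos cos_120 by (simp add: power2_eq_square)
  show "sin (4*pi/3) = - sqrt 3 / 2" unfolding e sin_double cos_120 sin_120 by simp
qed

lemma Fpot_eq: assumes "0 < x1" "0 < x2" "x1 + x2 < 1"
  shows "Fpot \<beta> r x1 x2 = Qf \<beta> r x1 x2"
proof -
  have x: "x1 \<noteq> 0" "x2 \<noteq> 0" "1 - x1 - x2 \<noteq> 0" using assms by auto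
  have s3: "sqrt 3 * sqrt 3 = (3::real)" by simp
  have mx: "(1 - x1 - x2) * cos 0 + x1 * cos (2*pi/3) + x2 * cos (4*pi/3) = 1 - x1 - x2 - x1/2 - x2/2"
    by (simp add: cos_120 cos_240)
  have my: "(1 - x1 - x2) * sin 0 + x1 * sin (2*pi/3) + x2 * sin (4*pi/3) = x1 * (sqrt 3/2) - x2 * (sqrt 3/2)"
    by (simp add: sin_120 sin_240)
  have q: "(1 - x1 - x2 - x1/2 - x2/2)^2 + (x1 * (sqrt 3/2) - x2 * (sqrt 3/2))^2
      = (1 - 3/2*(x1+x2))^2 + 3/4*(x1-x2)^2"
    apply (simp add: power2_eq_square algebra_simps s3)
    apply (simp add: field_simps)
    done
  have e: "xlog3 (1 - x1 - x2) = Ent (1 - x1 - x2)" "xlog3 x1 = Ent x1" "xlog3 x2 = Ent x2"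
    unfolding xlog3_def Ent_def using x by auto
  show ?thesis unfolding Fpot_def Let_def mx my q e Qf_def ..
qed

lemma pd1_F: assumes "0 < a" "0 < b" "a + b < 1" "\<beta> > 0"
  shows "pd1 (Fpot \<beta> r) a b = D1 \<beta> r a b"
proof -
  have "DERIV (\<lambda>t. Fpot \<beta> r t b) a :> D1 \<beta> r a b"
  proof (rule has_field_derivative_transform_within_open[OF Q_d1[OF assms]])
    show "open {0<..<1-b}" by simp
    show "a \<in> {0<..<1-b}" using assms by simp
    show "\<And>x. x \<in> {0<..<1-b} \<Longrightarrow> Qf \<beta> r x b = Fpot \<beta> r x b"
      using Fpot_eq assms by simp
  qed
  thus ?thesis unfolding pd1_def by (rule DERIV_imp_deriv)
qed

lemma pd2_F: assumes "0 < a" "0 < b" "a + b < 1" "\<beta> > 0"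
  shows "pd2 (Fpot \<beta> r) a b = D2 \<beta> r a b"
proof -
  have "DERIV (\<lambda>t. Fpot \<beta> r a t) b :> D2 \<beta> r a b"
  proof (rule has_field_derivative_transform_within_open[OF Q_d2[OF assms]])
    show "open {0<..<1-a}" by simp
    show "b \<in> {0<..<1-a}" using assms by simp
    show "\<And>x. x \<in> {0<..<1-a} \<Longrightarrow> Qf \<beta> r a x = Fpot \<beta> r a x"
      using Fpot_eq assms by simp
  qed
  thus ?thesis unfolding pd2_def by (rule DERIV_imp_deriv)
qed

lemma hess_F: assumes "0 < a" "0 < b" "a + b < 1" "\<beta> > 0"
  shows "hess (Fpot \<beta> r) a b 1 1 = D11 \<beta> a b" "hess (Fpot \<beta> r) a b 1 2 = D12 \<beta> a b"
        "hess (Fpot \<beta> r) a b 2 1 = D12 \<beta> a b" "hess (Fpot \<beta> r) a b 2 2 = D22 \<beta> a b"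
proof -
  have "DERIV (\<lambda>t. pd1 (Fpot \<beta> r) t b) a :> D11 \<beta> a b"
  proof (rule has_field_derivative_transform_within_open[OF D1_d1[OF assms]])
    show "open {0<..<1-b}" by simp
    show "a \<in> {0<..<1-b}" using assms by simp
    show "\<And>x. x \<in> {0<..<1-b} \<Longrightarrow> D1 \<beta> r x b = pd1 (Fpot \<beta> r) x b"
      using pd1_F assms by simp
  qed
  thus "hess (Fpot \<beta> r) a b 1 1 = D11 \<beta> a b" unfolding hess_def pd1_def[of "pd1 _"] by (simp add: DERIV_imp_deriv)
  have "DERIV (\<lambda>t. pd1 (Fpot \<beta> r) a t) b :> D12 \<beta> a b"
  proof (rule has_field_derivative_transform_within_open[OF D1_d2[OF assms]])
    show "open {0<..<1-a}" by simp
    show "b \<in> {0<..<1-a}" using assms by simp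
    show "\<And>x. x \<in> {0<..<1-a} \<Longrightarrow> D1 \<beta> r a x = pd1 (Fpot \<beta> r) a x"
      using pd1_F assms by simp
  qed
  thus "hess (Fpot \<beta> r) a b 1 2 = D12 \<beta> a b" unfolding hess_def pd2_def[of "pd1 _"] by (simp add: DERIV_imp_deriv)
  have "DERIV (\<lambda>t. pd2 (Fpot \<beta> r) t b) a :> D12 \<beta> a b"
  proof (rule has_field_derivative_transform_within_open[OF D2_d1[OF assms]])
    show "open {0<..<1-b}" by simp
    show "a \<in> {0<..<1-b}" using assms by simp
    show "\<And>x. x \<in> {0<..<1-b} \<Longrightarrow> D2 \<beta> r x b = pd2 (Fpot \<beta> r) x b"
      using pd2_F assms by simp
  qed
  thus "hess (Fpot \<beta> r) a b 2 1 = D12 \<beta> a b" unfolding hess_def pd1_def[of "pd2 _"] by (simp add: DERIV_imp_deriv)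
  have "DERIV (\<lambda>t. pd2 (Fpot \<beta> r) a t) b :> D22 \<beta> a b"
  proof (rule has_field_derivative_transform_within_open[OF D2_d2[OF assms]])
    show "open {0<..<1-a}" by simp
    show "b \<in> {0<..<1-a}" using assms by simp
    show "\<And>x. x \<in> {0<..<1-a} \<Longrightarrow> D2 \<beta> r a x = pd2 (Fpot \<beta> r) a x"
      using pd2_F assms by simp
  qed
  thus "hess (Fpot \<beta> r) a b 2 2 = D22 \<beta> a b" unfolding hess_def pd2_def[of "pd2 _"] by (simp add: DERIV_imp_deriv)
qed

lemma crit_F: assumes "0 < a" "0 < b" "a + b < 1" "\<beta> > 0" "D1 \<beta> r a b = 0" "D2 \<beta> r a b = 0"
  shows "critical_pt (Fpot \<beta> r) a b"
proof -
  define U where "U = {p::real\<times>real. 0 < fst p} \<inter> ({p. 0 < snd p} \<inter> {p. fst p + snd p < 1})"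
  have oU: "open U" unfolding U_def
    by (intro open_Int open_Collect_less continuous_intros)
  have "((\<lambda>p. Qf \<beta> r (fst p) (snd p)) has_derivative (\<lambda>h. 0)) (at (a, b))"
    using Q_frechet[OF assms(1-4), of r] assms(5,6) by simp
  hence "((\<lambda>p. Fpot \<beta> r (fst p) (snd p)) has_derivative (\<lambda>h. 0)) (at (a, b))"
  proof (rule has_derivative_transform_within_open[OF _ oU])
    show "(a, b) \<in> U" unfolding U_def using assms by simp
    show "\<And>x. x \<in> U \<Longrightarrow> Qf \<beta> r (fst x) (snd x) = Fpot \<beta> r (fst x) (snd x)"
      unfolding U_def using Fpot_eq by simp
  qed
  thus ?thesis unfolding critical_pt_def .
qed

lemma eigen_sym:
  fixes p q s :: real
  assumes "M 1 1 = p" "M 1 2 = q" "M 2 1 = q" "M 2 2 = s" "p * s - q^2 < 0" "q \<noteq> 0"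
  shows "\<exists>lam1 lam2. lam1 > 0 \<and> lam2 < 0 \<and> eigen2 M lam1 \<and> eigen2 M lam2"
proof -
  define D where "D = sqrt ((p - s)^2 + 4 * q^2)"
  have D2: "D^2 = (p - s)^2 + 4 * q^2" unfolding D_def by simp
  have D0: "D \<ge> 0" unfolding D_def by simp
  have "D^2 > (p + s)^2" using D2 assms(5) by (simp add: power2_eq_square algebra_simps)
  hence Dgt: "D > \<bar>p + s\<bar>" using D0 by (metis abs_of_nonneg power2_abs abs_less_iff power_less_imp_less_base)
  have eig: "eigen2 M lam" if "lam^2 - (p + s) * lam + (p * s - q^2) = 0" for lam
    unfolding eigen2_def
  proof (rule exI[of _ q], rule exI[of _ "lam - p"], intro conjI)
    show "(q, lam - p) \<noteq> (0, 0)" using assms by simp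
    show "M 1 1 * q + M 1 2 * (lam - p) = lam * q" using assms by (simp add: algebra_simps)
    show "M 2 1 * q + M 2 2 * (lam - p) = lam * (lam - p)" using assms that
      by (simp add: algebra_simps power2_eq_square)
  qed
  have "((p + s + D)/2)^2 - (p + s) * ((p + s + D)/2) + (p * s - q^2) = 0"
    using D2 by (simp add: power2_eq_square field_simps)
  moreover have "((p + s - D)/2)^2 - (p + s) * ((p + s - D)/2) + (p * s - q^2) = 0"
    using D2 by (simp add: power2_eq_square field_simps)
  moreover have "(p + s + D)/2 > 0" "(p + s - D)/2 < 0" using Dgt by auto
  ultimately show ?thesis using eig by blast
qed


theorem lemma5p7:
  fixes \<beta> r :: real
  assumes "\<beta> > 2" and "r > 0"
  shows "(r \<le> r1 \<beta> \<longrightarrow> (\<exists>!y. eq_y1 \<beta> r y))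
       \<and> (r > r1 \<beta> \<longrightarrow> \<not> (\<exists>y. eq_y1 \<beta> r y))
       \<and> (r < r1 \<beta> \<longrightarrow> saddle_pt \<beta> r (Hb \<beta> (y1 \<beta> r)) (Kb \<beta> (y1 \<beta> r)))"
proof -
  have b0: "\<beta> > 0" using assms by simp
  have r0: "r \<ge> 0" using assms by simp
  have l: "0 < lb \<beta>" using lb_facts assms by auto
  have uniq: "y = y'" if "eq_y1 \<beta> r y" "eq_y1 \<beta> r y'" for y y'
  proof (rule ccontr)
    assume ne: "y \<noteq> y'"
    have a: "y \<le> gb \<beta>" "Lf \<beta> r y = 1" "y' \<le> gb \<beta>" "Lf \<beta> r y' = 1" using that eq_y1_iff by auto
    show False
    proof (cases "y < y'")
      case True thus False using L_strict[OF assms(1) r0 True a(3)] a by simp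
    next
      case False hence yy: "y' < y" using ne by simp
      show False using L_strict[OF assms(1) r0 yy a(1)] a by simp
    qed
  qed
  have lowL: "Lf \<beta> r (Gfun \<beta> 1) > 1" "Gfun \<beta> 1 < gb \<beta>" using L_low[OF assms(1) r0] by auto
  have P1: "r \<le> r1 \<beta> \<longrightarrow> (\<exists>!y. eq_y1 \<beta> r y)"
  proof
    assume rr: "r \<le> r1 \<beta>"
    have "Lf \<beta> r (gb \<beta>) \<le> 1" using L_g[OF assms(1) r0] rr by (cases "r = r1 \<beta>") auto
    then obtain y where y: "Gfun \<beta> 1 \<le> y" "y \<le> gb \<beta>" "Lf \<beta> r y = 1"
      using IVT2'[of "Lf \<beta> r" "gb \<beta>" 1 "Gfun \<beta> 1"] lowL L_cont[OF assms(1) r0, of "Gfun \<beta> 1"] by auto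
    hence "eq_y1 \<beta> r y" using eq_y1_iff by auto
    thus "\<exists>!y. eq_y1 \<beta> r y" using uniq by blast
  qed
  have P2: "r > r1 \<beta> \<longrightarrow> \<not> (\<exists>y. eq_y1 \<beta> r y)"
  proof (intro impI notI)
    assume rr: "r > r1 \<beta>" and "\<exists>y. eq_y1 \<beta> r y"
    then obtain y where y: "y \<le> gb \<beta>" "Lf \<beta> r y = 1" using eq_y1_iff by auto
    have Lg: "Lf \<beta> r (gb \<beta>) > 1" using L_g[OF assms(1) r0] rr by force
    show False
    proof (cases "y = gb \<beta>")
      case True thus False using y Lg by simp
    next
      case False hence "y < gb \<beta>" using y by simp
      thus False using L_strict[OF assms(1) r0 _ order_refl] y Lg by force
    qed
  qed
  have P3: "r < r1 \<beta> \<longrightarrow> saddle_pt \<beta> r (Hb \<beta> (y1 \<beta> r)) (Kb \<beta> (y1 \<beta> r))"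
  proof
    assume rr: "r < r1 \<beta>"
    define y where "y = y1 \<beta> r"
    have "\<exists>!y. eq_y1 \<beta> r y" using P1 rr by simp
    hence ey: "eq_y1 \<beta> r y" unfolding y_def y1_def by (rule theI')
    hence yg: "y \<le> gb \<beta>" and Ly: "Lf \<beta> r y = 1" using eq_y1_iff by auto
    have Lg: "Lf \<beta> r (gb \<beta>) < 1" using L_g[OF assms(1) r0] rr by simp
    have ylt: "y < gb \<beta>" using yg Ly Lg by (cases "y = gb \<beta>") auto
    have yc: "y - 3*r/2 < gb \<beta>" using ylt assms by simp
    define h where "h = Hb \<beta> y"
    define k where "k = Kb \<beta> y"
    define x0 where "x0 = Kb \<beta> (y - 3*r/2)"
    have hp: "0 < h" "Gfun \<beta> h = y" using H_props[OF assms(1) yg] h_def by auto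
    have kp: "Gfun \<beta> k = y" using K_props[OF assms(1) yg] k_def by auto
    have x0p: "Gfun \<beta> x0 = y - 3*r/2" using K_props[OF assms(1)] yc x0_def by auto
    have hl: "h < lb \<beta>" "lb \<beta> < k" using strict_inside[OF assms(1) ylt] h_def k_def by auto
    have x0l: "lb \<beta> < x0" using strict_inside[OF assms(1) yc] x0_def by auto
    have sum: "x0 + h + k = 1" using Ly unfolding Lf_def h_def k_def x0_def by simp
    have x0e: "1 - h - k = x0" using sum by simp
    have kpos: "0 < k" "0 < x0" using hl x0l l by auto
    have int: "0 < h" "0 < k" "h + k < 1" using hp kpos sum by auto
    have lnh: "ln (3 * h) - ln (3 * x0) = ln h - ln x0" using hp kpos by (simp add: ln_mult_pos)
    have lnk: "ln (3 * k) - ln (3 * x0) = ln k - ln x0" using hp kpos by (simp add: ln_mult_pos)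
    have d1: "D1 \<beta> r h k = 0"
    proof -
      have "D1 \<beta> r h k = Gfun \<beta> h - Gfun \<beta> x0 - 3*r/2"
        unfolding D1_def x0e lnh Gfun_def using sum by (simp add: algebra_simps)
      thus ?thesis using hp x0p by simp
    qed
    have d2: "D2 \<beta> r h k = 0"
    proof -
      have "D2 \<beta> r h k = Gfun \<beta> k - Gfun \<beta> x0 - 3*r/2"
        unfolding D2_def x0e lnk Gfun_def using sum by (simp add: algebra_simps)
      thus ?thesis using kp x0p by simp
    qed
    have crit: "critical_pt (Fpot \<beta> r) h k" using crit_F[OF int b0 d1 d2] .
    define A where "A = 1/(\<beta>*h) - 3/2"
    define B where "B = 1/(\<beta>*k) - 3/2"
    define C where "C = 1/(\<beta>*x0) - 3/2"
    have pA: "D11 \<beta> h k = A + C" unfolding D11_def A_def C_def x0e by (simp add: algebra_simps)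
    have qC: "D12 \<beta> h k = C" unfolding D12_def C_def x0e by (simp add: algebra_simps)
    have sB: "D22 \<beta> h k = B + C" unfolding D22_def B_def C_def x0e by (simp add: algebra_simps)
    have Apos: "A > 0"
    proof -
      have "\<beta> * h < 2/3" using hl(1) b0 unfolding lb_def by (simp add: field_simps)
      hence "3/2 < 1/(\<beta>*h)" using b0 hp by (simp add: field_simps)
      thus ?thesis unfolding A_def by simp
    qed
    have Bneg: "B < 0"
    proof -
      have "\<beta> * k > 2/3" using hl(2) b0 unfolding lb_def by (simp add: field_simps)
      hence "1/(\<beta>*k) < 3/2" using b0 kpos by (simp add: field_simps)
      thus ?thesis unfolding B_def by simp
    qed
    have Cneg: "C < 0"
    proof -
      have "\<beta> * x0 > 2/3" using x0l b0 unfolding lb_def by (simp add: field_simps)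
      hence "1/(\<beta>*x0) < 3/2" using b0 kpos by (simp add: field_simps)
      thus ?thesis unfolding C_def by simp
    qed
    have ABpos: "A + B > 0"
    proof -
      have "2 * h * k < lb \<beta> * (h + k)" using saddle_ineq[OF assms(1) ylt] h_def k_def by simp
      hence "3 * \<beta> * (h * k) < h + k" using b0 unfolding lb_def by (simp add: field_simps)
      hence "3 < (h + k) / (\<beta> * (h * k))" using b0 hp kpos by (simp add: field_simps)
      moreover have "(h + k) / (\<beta> * (h * k)) = 1/(\<beta>*h) + 1/(\<beta>*k)" using b0 hp kpos by (simp add: field_simps)
      ultimately show ?thesis unfolding A_def B_def by simp
    qed
    have det: "(A + C) * (B + C) - C^2 < 0"
    proof -
      have "(A + C) * (B + C) - C^2 = A * B + C * (A + B)" by (simp add: power2_eq_square algebra_simps)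
      moreover have "A * B < 0" using Apos Bneg by (simp add: mult_pos_neg)
      moreover have "C * (A + B) < 0" using Cneg ABpos by (simp add: mult_neg_pos)
      ultimately show ?thesis by simp
    qed
    have eig: "\<exists>lam1 lam2. lam1 > 0 \<and> lam2 < 0 \<and> eigen2 (hess (Fpot \<beta> r) h k) lam1
                              \<and> eigen2 (hess (Fpot \<beta> r) h k) lam2"
      by (rule eigen_sym[of _ "A + C" C "B + C"]) (use hess_F[OF int b0, of r] pA qC sB det Cneg in auto)
    show "saddle_pt \<beta> r (Hb \<beta> (y1 \<beta> r)) (Kb \<beta> (y1 \<beta> r))"
      unfolding saddle_pt_def y_def[symmetric] h_def[symmetric] k_def[symmetric]
      using int crit eig by auto
  qed
  show ?thesis using P1 P2 P3 by blast
qed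

end
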